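(* Assume (A1), (A2), and that $\{\gamma_n\}_{n\ge1}$ is a deterministic $[0,1)$-valued non-increasing sequence with $\lim\gamma_n=0$ and $\sum_n\gamma_n^2<\infty$. Then for the linearized Wang–Landau algorithm, almost surely, for all $n\ge0$, $$\|\pi_{\theta_n}d\lambda-\pi_{\theta_{n+1}}d\lambda\|_{TV}\le 2d(d-1)\gamma_{n+1},$$ and for every $N\ge0$ and all $n\ge N$, $$\sup_{x\in\mathsf X}\|P_{\theta_n}(x,\cdot)-P_{\theta_{n+1}}(x,\cdot)\|_{TV}\le 4\Big(1+\frac{1}{1-\sup_{j\ge N}\gamma_{j+1}}\Big)\gamma_{n+1}.$$
   Context: Setting: $(\mathsf X,\mathcal X)$ Polish space with Borel $\sigma$-algebra and $\sigma$-finite reference measure $\lambda$; $\pi$ a probability density w.r.t. $\lambda$; $d\ge2$; $\mathsf X_1,\dots,\mathsf X_d$ a measurable partition of $\mathsf X$; $I(x)=i$ iff $x\in\mathsf X_i$; $\theta_\star(i)=\int_{\mathsf X_i}\pi\,d\lambda$; $\Theta=\{\theta\in(0,1)^d:\sum_i\theta(i)=1\}$; $\pi_\theta(x)=\big(\sum_{i}\theta_\star(i)/\theta(i)\big)^{-1}\sum_{i}\frac{\pi(x)}{\theta(i)}\mathbf 1_{\mathsf X_i}(x)$. $\|\mu\|_{TV}=\sup\{|\mu(f)|:\sup|f|\le1\}$. (A1): $0<\inf\pi\le\sup\pi<\infty$ and $\min_i\theta_\star(i)>0$. (A2): $P_\theta$ is the Metropolis–Hastings kernel with target $\pi_\theta\,d\lambda$,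 symmetric proposal density $q$ w.r.t. $\lambda$ with $\inf_{\mathsf X^2}q>0$, acceptance $1\wedge\pi_\theta(y)/\pi_\theta(x)$. Linearized Wang–Landau algorithm: $X_0\in\mathsf X$, $\theta_0\in\Theta$; $X_{n+1}\sim P_{\theta_n}(X_n,\cdot)$ conditionally on $\mathcal F_n=\sigma(\theta_0,X_0,\dots,X_n)$; $\theta_{n+1}=\theta_n+\gamma_{n+1}H(X_{n+1},\theta_n)$ with $H_i(x,\theta)=\theta(i)(\mathbf 1_{\mathsf X_i}(x)-\theta(I(x)))$. *)

theory Defs
  imports "HOL-Probability.Probability"
begin

text \<open>Partition cells are indexed by 0..d-1; parameters theta are functions nat => real,
  only the values at i < d matter.\<close>

definition cell_index :: "nat \<Rightarrow> (nat \<Rightarrow> 'a set) \<Rightarrow> 'a \<Rightarrow> nat" where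
  "cell_index d Xs x = (THE i. i < d \<and> x \<in> Xs i)"

definition Theta :: "nat \<Rightarrow> (nat \<Rightarrow> real) set" where
  "Theta d = {\<theta>. (\<forall>i<d. 0 < \<theta> i \<and> \<theta> i < 1) \<and> (\<Sum>i<d. \<theta> i) = 1}"

definition theta_star :: "'a measure \<Rightarrow> ('a \<Rightarrow> real) \<Rightarrow> (nat \<Rightarrow> 'a set) \<Rightarrow> nat \<Rightarrow> real" where
  "theta_star lam \<pi> Xs i = (\<integral>x\<in>Xs i. \<pi> x \<partial>lam)"

definition pi_theta :: "nat \<Rightarrow> 'a measure \<Rightarrow> ('a \<Rightarrow> real) \<Rightarrow> (nat \<Rightarrow> 'a set)
    \<Rightarrow> (nat \<Rightarrow> real) \<Rightarrow> 'a \<Rightarrow> real" where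
  "pi_theta d lam \<pi> Xs \<theta> x =
     inverse (\<Sum>i<d. theta_star lam \<pi> Xs i / \<theta> i) * (\<Sum>i<d. \<pi> x / \<theta> i * indicator (Xs i) x)"

definition mh_acc :: "nat \<Rightarrow> 'a measure \<Rightarrow> ('a \<Rightarrow> real) \<Rightarrow> (nat \<Rightarrow> 'a set)
    \<Rightarrow> (nat \<Rightarrow> real) \<Rightarrow> 'a \<Rightarrow> 'a \<Rightarrow> real" where
  "mh_acc d lam \<pi> Xs \<theta> x y = min 1 (pi_theta d lam \<pi> Xs \<theta> y / pi_theta d lam \<pi> Xs \<theta> x)"

text \<open>In particular P_theta(x,A) = mh_op ... (indicator A) x.\<close>
definition mh_op :: "nat \<Rightarrow> 'a measure \<Rightarrow> ('a \<Rightarrow> real) \<Rightarrow> (nat \<Rightarrow> 'a set) \<Rightarrow> ('a \<Rightarrow> 'a \<Rightarrow> real)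
    \<Rightarrow> (nat \<Rightarrow> real) \<Rightarrow> ('a \<Rightarrow> real) \<Rightarrow> 'a \<Rightarrow> real" where
  "mh_op d lam \<pi> Xs q \<theta> f x =
     (\<integral>y. f y * q x y * mh_acc d lam \<pi> Xs \<theta> x y \<partial>lam)
     + f x * (1 - (\<integral>y. q x y * mh_acc d lam \<pi> Xs \<theta> x y \<partial>lam))"

definition tv_dist :: "'a measure \<Rightarrow> 'a measure \<Rightarrow> real" where
  "tv_dist \<mu> \<nu> = (SUP f \<in> {f \<in> borel_measurable \<mu>. \<forall>x. \<bar>f x\<bar> \<le> 1}.
                     \<bar>(\<integral>x. f x \<partial>\<mu>) - (\<integral>x. f x \<partial>\<nu>)\<bar>)"

definition tv_kernel :: "'a measure \<Rightarrow> (('a \<Rightarrow> real) \<Rightarrow> 'a \<Rightarrow> real) \<Rightarrow> (('a \<Rightarrow> real) \<Rightarrow> 'a \<Rightarrow> real)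
    \<Rightarrow> 'a \<Rightarrow> real" where
  "tv_kernel lam P Q x = (SUP f \<in> {f \<in> borel_measurable lam. \<forall>y. \<bar>f y\<bar> \<le> 1}.
                     \<bar>P f x - Q f x\<bar>)"

definition H_wl :: "nat \<Rightarrow> (nat \<Rightarrow> 'a set) \<Rightarrow> nat \<Rightarrow> 'a \<Rightarrow> (nat \<Rightarrow> real) \<Rightarrow> real" where
  "H_wl d Xs i x \<theta> = \<theta> i * (indicator (Xs i) x - \<theta> (cell_index d Xs x))"

definition wl_filtration :: "'w measure \<Rightarrow> nat \<Rightarrow> (nat \<Rightarrow> 'w \<Rightarrow> 'a::topological_space)
    \<Rightarrow> ('w \<Rightarrow> nat \<Rightarrow> real) \<Rightarrow> nat \<Rightarrow> 'w measure" where
  "wl_filtration M d X \<theta>0 n = sigma (space M)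
     ({X k -` A \<inter> space M | k A. k \<le> n \<and> A \<in> sets borel}
      \<union> {(\<lambda>\<omega>. \<theta>0 \<omega> i) -` B \<inter> space M | i B. i < d \<and> B \<in> sets (borel :: real measure)})"

end

theory Submission
  imports Defs
begin

lemma abs_int_le:
  fixes f g :: "'b \<Rightarrow> real"
  assumes "integrable M f" "integrable M g" "\<And>x. x \<in> space M \<Longrightarrow> \<bar>f x\<bar> \<le> g x"
  shows "\<bar>integral\<^sup>L M f\<bar> \<le> integral\<^sup>L M g"
proof -
  have "\<bar>integral\<^sup>L M f\<bar> \<le> (\<integral>x. \<bar>f x\<bar> \<partial>M)" by simp
  also have "\<dots> \<le> integral\<^sup>L M g"
    by (rule integral_mono) (use assms in auto)
  finally show ?thesis .
qed

lemma min_diff: fixes r t :: real assumes "0 \<le> r" "0 < t"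
  shows "\<bar>min 1 r - min 1 (t*r)\<bar> \<le> \<bar>t - 1\<bar>"
proof (cases "t \<ge> 1")
  case True
  then have "r \<le> t*r" using assms by (simp add: mult_right_mono[of 1 t r, simplified])
  show ?thesis
  proof (cases "r \<le> 1")
    case True
    have "(t - 1) * r \<le> (t - 1) * 1" using True \<open>t\<ge>1\<close> by (intro mult_left_mono) auto
    then have "t*r - r \<le> t - 1" by (simp add: algebra_simps)
    then show ?thesis using True \<open>r \<le> t*r\<close> \<open>t \<ge> 1\<close> by (auto simp: min_def)
  next
    case False
    then have "1 \<le> t*r" "\<not> r \<le> 1" using \<open>r \<le> t*r\<close> by linarith+
    then show ?thesis by (simp add: min_def)
  qed
next
  case False
  then have "t*r \<le> r" using assms by (simp add: mult_right_mono[of t 1 r, simplified])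
  show ?thesis
  proof (cases "t*r \<le> 1")
    case True
    have "min 1 r - t*r \<le> 1 - t"
    proof (cases "r \<le> 1")
      case True
      have "(1 - t) * r \<le> (1 - t) * 1" using True False by (intro mult_left_mono) auto
      then have "r - t*r \<le> 1 - t" by (simp add: algebra_simps)
      then show ?thesis using True by simp
    next
      case f2: False
      have "1 - t*r \<le> 1 - t" using f2 assms by (simp add: mult_left_mono[of 1 r t, simplified])
      then show ?thesis using f2 by simp
    qed
    then show ?thesis using True \<open>t*r \<le> r\<close> False by (auto simp: min_def)
  next
    case f3: False then show ?thesis using \<open>t*r \<le> r\<close> False by (auto simp: min_def)
  qed
qed


lemma tv_gen:
  fixes g g' h :: "'b \<Rightarrow> real"
  assumes gm: "g \<in> borel_measurable M" "g' \<in> borel_measurable M"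
    and gn: "\<And>x. 0 \<le> g x" "\<And>x. 0 \<le> g' x"
    and gi: "integrable M g" "integrable M g'" "integrable M h"
    and b: "\<And>x. \<bar>g x - g' x\<bar> \<le> h x"
  shows "tv_dist (density M (\<lambda>x. ennreal (g x))) (density M (\<lambda>x. ennreal (g' x))) \<le> integral\<^sup>L M h"
  unfolding tv_dist_def
proof (rule cSUP_least, goal_cases)
  case 1
  have "(\<lambda>_. 0::real) \<in> {f \<in> borel_measurable (density M (\<lambda>x. ennreal (g x))). \<forall>x. \<bar>f x\<bar> \<le> (1::real)}"
    by (intro CollectI conjI borel_measurable_const allI) simp
  then show ?case using equals0D by fast
next
  case (2 f)
  then have "f \<in> borel_measurable (density M (\<lambda>x. ennreal (g x))) \<and> (\<forall>x. \<bar>f x\<bar> \<le> 1)"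
    by (rule CollectD)
  then have fm': "f \<in> borel_measurable (density M (\<lambda>x. ennreal (g x)))" and fb: "\<And>x. \<bar>f x\<bar> \<le> 1"
    by blast+
  have fm: "f \<in> borel_measurable M" using fm' by (simp only: measurable_density_eq1)
  have i1: "integral\<^sup>L (density M (\<lambda>x. ennreal (g x))) f = integral\<^sup>L M (\<lambda>x. g x * f x)"
    using integral_density[OF fm gm(1)] gn by simp
  have i2: "integral\<^sup>L (density M (\<lambda>x. ennreal (g' x))) f = integral\<^sup>L M (\<lambda>x. g' x * f x)"
    using integral_density[OF fm gm(2)] gn by simp
  have bnd: "\<bar>g x * f x\<bar> \<le> \<bar>g x\<bar>" for g :: "'b \<Rightarrow> real" and x
    using fb[of x] by (simp add: abs_mult mult_left_le)
  have j1: "integrable M (\<lambda>x. g x * f x)"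
    by (rule Bochner_Integration.integrable_bound[OF gi(1)]) (use fm gm bnd in auto)
  have j2: "integrable M (\<lambda>x. g' x * f x)"
    by (rule Bochner_Integration.integrable_bound[OF gi(2)]) (use fm gm bnd in auto)
  have "\<bar>integral\<^sup>L M (\<lambda>x. g x * f x) - integral\<^sup>L M (\<lambda>x. g' x * f x)\<bar>
      = \<bar>integral\<^sup>L M (\<lambda>x. g x * f x - g' x * f x)\<bar>"
    using j1 j2 by simp
  also have "\<dots> \<le> integral\<^sup>L M h"
  proof (rule abs_int_le)
    show "integrable M (\<lambda>x. g x * f x - g' x * f x)" using j1 j2 by simp
    show "integrable M h" by fact
    fix x
    have "\<bar>g x * f x - g' x * f x\<bar> = \<bar>g x - g' x\<bar> * \<bar>f x\<bar>"
      by (simp add: abs_mult left_diff_distrib[symmetric])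
    also have "\<dots> \<le> \<bar>g x - g' x\<bar>" using fb[of x] by (simp add: mult_left_le)
    also have "\<dots> \<le> h x" by fact
    finally show "\<bar>g x * f x - g' x * f x\<bar> \<le> h x" .
  qed
  finally show ?case unfolding i1 i2 .
qed

locale wl =
  fixes lam :: "'a::topological_space measure" and \<pi> :: "'a \<Rightarrow> real" and d :: nat
    and Xs :: "nat \<Rightarrow> 'a set" and q :: "'a \<Rightarrow> 'a \<Rightarrow> real"
  assumes lam_borel: "sets lam = sets borel"
    and pi_meas: "\<pi> \<in> borel_measurable lam"
    and pi_nonneg: "\<And>x. 0 \<le> \<pi> x"
    and pi_prob: "(\<integral>\<^sup>+x. ennreal (\<pi> x) \<partial>lam) = 1"
    and d_ge: "2 \<le> d"
    and Xs_meas: "\<And>i. i < d \<Longrightarrow> Xs i \<in> sets borel"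
    and Xs_disj: "\<And>i j. i < d \<Longrightarrow> j < d \<Longrightarrow> i \<noteq> j \<Longrightarrow> Xs i \<inter> Xs j = {}"
    and Xs_cover: "(\<Union>i<d. Xs i) = UNIV"
    and pi_pos: "\<exists>c>0. \<forall>x. c \<le> \<pi> x"
    and ts_pos: "\<And>i. i < d \<Longrightarrow> 0 < theta_star lam \<pi> Xs i"
    and q_meas: "case_prod q \<in> borel_measurable (lam \<Otimes>\<^sub>M lam)"
    and q_nonneg: "\<And>x y. 0 \<le> q x y"
    and q_dens: "\<And>x. (\<integral>\<^sup>+y. ennreal (q x y) \<partial>lam) = 1"
begin

abbreviation I where "I x \<equiv> cell_index d Xs x"
abbreviation Z :: "(nat \<Rightarrow> real) \<Rightarrow> real" where "Z \<theta> \<equiv> (\<Sum>i<d. theta_star lam \<pi> Xs i / \<theta> i)"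
abbreviation pt :: "(nat \<Rightarrow> real) \<Rightarrow> 'a \<Rightarrow> real" where "pt \<theta> \<equiv> pi_theta d lam \<pi> Xs \<theta>"
abbreviation pos :: "(nat \<Rightarrow> real) \<Rightarrow> bool" where "pos \<theta> \<equiv> (\<forall>i<d. 0 < \<theta> i)"

lemma space_lam: "space lam = UNIV"
  using sets_eq_imp_space_eq[OF lam_borel] by simp

lemma Xs_lam: "i < d \<Longrightarrow> Xs i \<in> sets lam"
  using Xs_meas lam_borel by simp

lemma cell_uniq: "i < d \<Longrightarrow> j < d \<Longrightarrow> x \<in> Xs i \<Longrightarrow> x \<in> Xs j \<Longrightarrow> i = j"
proof (rule ccontr)
  assume a: "i < d" "j < d" "x \<in> Xs i" "x \<in> Xs j" "i \<noteq> j"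
  then have "Xs i \<inter> Xs j = {}" by (intro Xs_disj)
  with a show False by auto
qed

lemma cell_prop: "I x < d \<and> x \<in> Xs (I x)"
proof -
  obtain i where i: "i<d" "x\<in>Xs i" using Xs_cover by blast
  have "I x = i" unfolding cell_index_def
  proof (rule the_equality)
    show "i < d \<and> x \<in> Xs i" using i by simp
    show "j = i" if "j < d \<and> x \<in> Xs j" for j using that i cell_uniq[of j i x] by simp
  qed
  thus ?thesis using i by simp
qed

lemma cell_eq: "i < d \<Longrightarrow> x \<in> Xs i \<Longrightarrow> I x = i"
  using cell_prop[of x] cell_uniq[of i "I x" x] by simp

lemma sum_ind: "(\<Sum>i<d. a i * indicator (Xs i) x) = (a (I x) :: real)"
proof -
  have "(\<Sum>i<d. a i * indicator (Xs i) x) = (\<Sum>i<d. if i = I x then a i else 0)"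
  proof (rule sum.cong)
    fix i assume "i \<in> {..<d}"
    then have i: "i < d" by simp
    show "a i * indicator (Xs i) x = (if i = I x then a i else 0)"
    proof (cases "i = I x")
      case True then show ?thesis using cell_prop[of x] by simp
    next
      case False
      then have "x \<notin> Xs i" using cell_eq[OF i, of x] by metis
      then show ?thesis using False by simp
    qed
  qed simp
  also have "\<dots> = a (I x)" using cell_prop by simp
  finally show ?thesis .
qed

lemma pt_eq: "pt \<theta> x = \<pi> x / (\<theta> (I x) * Z \<theta>)"
  unfolding pi_theta_def using sum_ind[of "\<lambda>i. \<pi> x / \<theta> i" x]
  by (simp add: divide_inverse ac_simps)

lemma Z_pos: "pos \<theta> \<Longrightarrow> 0 < Z \<theta>"
proof -
  assume "pos \<theta>"
  moreover have "0 \<in> {..<d}" using d_ge by auto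
  then have "{..<d} \<noteq> {}" by blast
  ultimately show ?thesis using ts_pos by (intro sum_pos) auto
qed

lemma theta_le1: "pos \<theta> \<Longrightarrow> (\<Sum>i<d. \<theta> i) = 1 \<Longrightarrow> i < d \<Longrightarrow> \<theta> i \<le> 1"
proof -
  assume a: "pos \<theta>" "(\<Sum>i<d. \<theta> i) = 1" "i < d"
  have "\<theta> i \<le> (\<Sum>i<d. \<theta> i)" by (rule member_le_sum) (use a in auto)
  with a show ?thesis by simp
qed

lemma pi_int: "integrable lam \<pi>"
  by (rule integrableI_nonneg) (use pi_meas pi_nonneg pi_prob in auto)

lemma pt_meas[measurable]: "pt \<theta> \<in> borel_measurable lam"
  unfolding pi_theta_def
  by (intro borel_measurable_times borel_measurable_const borel_measurable_sum
      borel_measurable_divide pi_meas borel_measurable_indicator Xs_lam) auto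

lemma pt_nonneg: "pos \<theta> \<Longrightarrow> 0 \<le> pt \<theta> x"
  using pt_eq[of \<theta> x] Z_pos[of \<theta>] cell_prop[of x] pi_nonneg[of x] by (auto intro!: divide_nonneg_pos mult_pos_pos)

lemma term_eq: "(\<lambda>x. \<pi> x / \<theta> i * indicator (Xs i) x) = (\<lambda>x. (indicator (Xs i) x *\<^sub>R \<pi> x) / \<theta> i)"
  by (auto simp: fun_eq_iff)

lemma term_int: "i < d \<Longrightarrow> integrable lam (\<lambda>x. \<pi> x / \<theta> i * indicator (Xs i) x)"
  unfolding term_eq by (intro integrable_mult_indicator integrable_divide pi_int Xs_lam)

lemma pt_int: "integrable lam (pt \<theta>)"
  unfolding pi_theta_def
  apply (rule integrable_mult_right)
  apply (rule Bochner_Integration.integrable_sum[where f="\<lambda>i x. \<pi> x / \<theta> i * indicator (Xs i) x"])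
  using term_int by auto

lemma term_integral: "integral\<^sup>L lam (\<lambda>x. \<pi> x / \<theta> i * indicator (Xs i) x) = theta_star lam \<pi> Xs i / \<theta> i"
  unfolding term_eq theta_star_def set_lebesgue_integral_def by (rule integral_divide_zero)

lemma pt_integral: "pos \<theta> \<Longrightarrow> integral\<^sup>L lam (pt \<theta>) = 1"
proof -
  assume p: "pos \<theta>"
  have s: "integral\<^sup>L lam (\<lambda>x. \<Sum>i<d. \<pi> x / \<theta> i * indicator (Xs i) x) = (\<Sum>i<d. integral\<^sup>L lam (\<lambda>x. \<pi> x / \<theta> i * indicator (Xs i) x))"
    by (rule Bochner_Integration.integral_sum) (rule term_int, simp)
  have "integral\<^sup>L lam (pt \<theta>) = inverse (Z \<theta>) * (\<Sum>i<d. integral\<^sup>L lam (\<lambda>x. \<pi> x / \<theta> i * indicator (Xs i) x))"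
    unfolding pi_theta_def integral_mult_right_zero s ..
  also have "\<dots> = inverse (Z \<theta>) * Z \<theta>"
    unfolding term_integral ..
  also have "\<dots> = 1" using Z_pos[OF p] by simp
  finally show ?thesis .
qed

lemma step_form:
  assumes "\<theta>' i = \<theta> i + g * H_wl d Xs i x \<theta>"
  shows "\<theta>' i = \<theta> i * (1 + g * (indicator (Xs i) x - \<theta> (I x)))"
  using assms unfolding H_wl_def by (simp add: algebra_simps)

lemma s_bounds:
  assumes "pos \<theta>" "(\<Sum>i<d. \<theta> i) = 1" "0 \<le> g" "g < 1"
  shows "1 - g \<le> 1 + g * (indicator (Xs i) x - \<theta> (I x)) \<and> 1 + g * (indicator (Xs i) x - \<theta> (I x)) \<le> 1 + g"
proof -
  have c: "I x < d" using cell_prop by simp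
  have t1: "\<theta> (I x) \<le> 1" using theta_le1[OF assms(1,2) c] .
  have t0: "0 < \<theta> (I x)" using assms(1) c by simp
  have "-1 \<le> indicator (Xs i) x - \<theta> (I x)" "indicator (Xs i) x - \<theta> (I x) \<le> 1"
    using t1 t0 by (auto simp: indicator_def)
  then have "g * (-1) \<le> g * (indicator (Xs i) x - \<theta> (I x))" "g * (indicator (Xs i) x - \<theta> (I x)) \<le> g * 1"
    using assms(3) by (intro mult_left_mono; simp)+
  then show ?thesis by simp
qed

lemma step_inv:
  assumes "pos \<theta>" "(\<Sum>i<d. \<theta> i) = 1" "0 \<le> g" "g < 1"
    and "\<And>i. i < d \<Longrightarrow> \<theta>' i = \<theta> i * (1 + g * (indicator (Xs i) x - \<theta> (I x)))"
  shows "pos \<theta>' \<and> (\<Sum>i<d. \<theta>' i) = 1"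
proof
  show "pos \<theta>'"
  proof (intro allI impI)
    fix i assume i: "i < d"
    have "0 < 1 + g * (indicator (Xs i) x - \<theta> (I x))"
      using s_bounds[OF assms(1-4), of i x] assms(4) by linarith
    then show "0 < \<theta>' i" using assms(1) assms(5)[OF i] i by simp
  qed
  have "(\<Sum>i<d. \<theta>' i) = (\<Sum>i<d. \<theta> i + g * (\<theta> i * indicator (Xs i) x) - g * \<theta> (I x) * \<theta> i)"
    by (rule sum.cong) (auto simp: assms(5) algebra_simps)
  also have "\<dots> = (\<Sum>i<d. \<theta> i) + g * (\<Sum>i<d. \<theta> i * indicator (Xs i) x) - g * \<theta> (I x) * (\<Sum>i<d. \<theta> i)"
    by (simp only: sum.distrib sum_subtractf sum_distrib_left)
  also have "\<dots> = 1" unfolding sum_ind assms(2) by simp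
  finally show "(\<Sum>i<d. \<theta>' i) = 1" .
qed

lemma Z_bounds:
  assumes "pos \<theta>" "\<And>i. i < d \<Longrightarrow> \<theta>' i = \<theta> i * s i"
    and "\<And>i. i < d \<Longrightarrow> 1 - g \<le> s i \<and> s i \<le> 1 + g" "g < 1"
  shows "Z \<theta> \<le> (1 + g) * Z \<theta>'" "(1 - g) * Z \<theta>' \<le> Z \<theta>"
proof -
  have e: "theta_star lam \<pi> Xs i / \<theta> i = theta_star lam \<pi> Xs i / \<theta>' i * s i" if "i < d" for i
  proof -
    have "0 < s i" using assms(3)[OF that] assms(4) by linarith
    then show ?thesis using assms(1) that assms(2)[OF that] by (simp add: field_simps)
  qed
  have u: "0 \<le> theta_star lam \<pi> Xs i / \<theta>' i" if "i < d" for i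
  proof -
    have "0 < s i" using assms(3)[OF that] assms(4) by linarith
    then have "0 < \<theta>' i" using assms(1) that assms(2)[OF that] by simp
    then show ?thesis using ts_pos[OF that] by simp
  qed
  show "Z \<theta> \<le> (1 + g) * Z \<theta>'"
    unfolding sum_distrib_left
  proof (rule sum_mono)
    fix i assume "i \<in> {..<d}" then have i: "i < d" by simp
    show "theta_star lam \<pi> Xs i / \<theta> i \<le> (1 + g) * (theta_star lam \<pi> Xs i / \<theta>' i)"
      unfolding e[OF i] using mult_left_mono[OF conjunct2[OF assms(3)[OF i]] u[OF i]]
      by (simp add: ac_simps)
  qed
  show "(1 - g) * Z \<theta>' \<le> Z \<theta>"
    unfolding sum_distrib_left
  proof (rule sum_mono)
    fix i assume "i \<in> {..<d}" then have i: "i < d" by simp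
    show "(1 - g) * (theta_star lam \<pi> Xs i / \<theta>' i) \<le> theta_star lam \<pi> Xs i / \<theta> i"
      unfolding e[OF i] using mult_left_mono[OF conjunct1[OF assms(3)[OF i]] u[OF i]]
      by (simp add: ac_simps)
  qed
qed

lemma pi_ne0: "\<pi> x \<noteq> 0"
  using pi_pos by (metis less_le_trans order_less_irrefl)

lemma pt_ratio:
  assumes "pos \<theta>" "pos \<theta>'" "\<And>i. i < d \<Longrightarrow> \<theta>' i = \<theta> i * s i"
    and "\<And>i. i < d \<Longrightarrow> 1 - g \<le> s i \<and> s i \<le> 1 + g" "g < 1"
  shows "\<exists>w. pt \<theta>' x = w * pt \<theta> x \<and> w*(1-g) \<le> 1+g \<and> 1-g \<le> w*(1+g) \<and> 0 \<le> w"
proof -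
  let ?c = "I x"
  have c: "?c < d" using cell_prop by simp
  have sp: "0 < s ?c" using assms(4)[OF c] assms(5) by linarith
  have Zp: "0 < Z \<theta>" "0 < Z \<theta>'" using Z_pos assms(1,2) by auto
  have tp: "0 < \<theta> ?c" using assms(1) c by simp
  define w where "w = Z \<theta> / (s ?c * Z \<theta>')"
  have w0: "0 \<le> w" unfolding w_def using Zp sp by simp
  have eq: "pt \<theta>' x = w * pt \<theta> x"
    unfolding pt_eq assms(3)[OF c] w_def using Zp sp tp by (simp add: field_simps)
  have wsz: "w * s ?c * Z \<theta>' = Z \<theta>" unfolding w_def using Zp sp by (simp add: field_simps)
  have zb: "Z \<theta> \<le> (1 + g) * Z \<theta>'" "(1 - g) * Z \<theta>' \<le> Z \<theta>"
    using Z_bounds[OF assms(1,3,4,5)] by auto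
  have "w * (1 - g) * Z \<theta>' \<le> w * s ?c * Z \<theta>'"
    using assms(4)[OF c] w0 Zp by (intro mult_right_mono mult_left_mono) auto
  then have "w * (1 - g) * Z \<theta>' \<le> (1 + g) * Z \<theta>'" using wsz zb by linarith
  then have a1: "w * (1 - g) \<le> 1 + g" using Zp by simp
  have "w * s ?c * Z \<theta>' \<le> w * (1 + g) * Z \<theta>'"
    using assms(4)[OF c] w0 Zp by (intro mult_right_mono mult_left_mono) auto
  then have "(1 - g) * Z \<theta>' \<le> w * (1 + g) * Z \<theta>'" using wsz zb by linarith
  then have a2: "1 - g \<le> w * (1 + g)" using Zp by simp
  show ?thesis using eq a1 a2 w0 by blast
qed

lemma w_close:
  fixes w g :: real
  assumes "w*(1-g) \<le> 1+g" "1-g \<le> w*(1+g)" "0 \<le> g" "g \<le> 1/2"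
  shows "\<bar>1 - w\<bar> \<le> 4 * g"
proof -
  have "0 \<le> g * (2 - 4*g)" using assms by simp
  then have "1 + g \<le> (1 + 4*g) * (1 - g)" by (simp add: algebra_simps)
  then have "w * (1-g) \<le> (1 + 4*g) * (1 - g)" using assms(1) by linarith
  moreover have "0 < 1 - g" using assms by linarith
  ultimately have u: "w \<le> 1 + 4*g" by (rule mult_right_le_imp_le)
  have "0 \<le> g * (2 + 4*g)" using assms by simp
  then have "(1 - 4*g) * (1 + g) \<le> 1 - g" by (simp add: algebra_simps)
  then have "(1 - 4*g) * (1 + g) \<le> w * (1 + g)" using assms(2) by linarith
  moreover have "0 < 1 + g" using assms by linarith
  ultimately have l: "1 - 4*g \<le> w" by (rule mult_right_le_imp_le)
  show ?thesis using u l by linarith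
qed

lemma tv1:
  assumes "pos \<theta>" "pos \<theta>'" "\<And>i. i < d \<Longrightarrow> \<theta>' i = \<theta> i * s i"
    and "\<And>i. i < d \<Longrightarrow> 1 - g \<le> s i \<and> s i \<le> 1 + g" "0 \<le> g" "g < 1"
  shows "tv_dist (density lam (\<lambda>x. ennreal (pt \<theta> x))) (density lam (\<lambda>x. ennreal (pt \<theta>' x))) \<le> 4 * g"
proof (cases "g \<le> 1/2")
  case True
  have "tv_dist (density lam (\<lambda>x. ennreal (pt \<theta> x))) (density lam (\<lambda>x. ennreal (pt \<theta>' x)))
      \<le> integral\<^sup>L lam (\<lambda>x. 4 * g * pt \<theta> x)"
  proof (rule tv_gen)
    fix x
    obtain w where w: "pt \<theta>' x = w * pt \<theta> x" "w*(1-g) \<le> 1+g" "1-g \<le> w*(1+g)" "0 \<le> w"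
      using pt_ratio[OF assms(1-4,6)] by blast
    have "\<bar>pt \<theta> x - pt \<theta>' x\<bar> = \<bar>1 - w\<bar> * pt \<theta> x"
    proof -
      have "pt \<theta> x - w * pt \<theta> x = (1 - w) * pt \<theta> x" by (simp add: algebra_simps)
      then show ?thesis unfolding w(1) using pt_nonneg[OF assms(1), of x] by (simp add: abs_mult)
    qed
    also have "\<dots> \<le> 4 * g * pt \<theta> x"
      using w_close[OF w(2,3) assms(5) True] pt_nonneg[OF assms(1)] by (intro mult_right_mono) auto
    finally show "\<bar>pt \<theta> x - pt \<theta>' x\<bar> \<le> 4 * g * pt \<theta> x" .
  qed (use pt_nonneg assms(1,2) pt_int in auto)
  also have "\<dots> = 4 * g" using pt_integral[OF assms(1)] by simp
  finally show ?thesis .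
next
  case False
  have "tv_dist (density lam (\<lambda>x. ennreal (pt \<theta> x))) (density lam (\<lambda>x. ennreal (pt \<theta>' x)))
      \<le> integral\<^sup>L lam (\<lambda>x. pt \<theta> x + pt \<theta>' x)"
  proof (rule tv_gen)
    fix x show "\<bar>pt \<theta> x - pt \<theta>' x\<bar> \<le> pt \<theta> x + pt \<theta>' x"
      using pt_nonneg[OF assms(1), of x] pt_nonneg[OF assms(2), of x] by linarith
  qed (use pt_nonneg assms(1,2) pt_int in auto)
  also have "\<dots> = 2" using pt_integral[OF assms(1)] pt_integral[OF assms(2)] pt_int by simp
  finally show ?thesis using False by linarith
qed

lemma q_meas_y: "(\<lambda>y. q x y) \<in> borel_measurable lam"
  using measurable_Pair2[OF q_meas, of x] space_lam by simp

lemma q_int: "integrable lam (\<lambda>y. q x y)"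
  by (rule integrableI_nonneg) (use q_meas_y q_nonneg q_dens in auto)

lemma q_integral: "integral\<^sup>L lam (\<lambda>y. q x y) = 1"
  using integral_eq_nn_integral[OF q_meas_y, of x] q_nonneg q_dens by simp

lemma int_q_bound:
  assumes "integrable lam u" "\<And>y. \<bar>u y\<bar> \<le> k * q x y"
  shows "\<bar>integral\<^sup>L lam u\<bar> \<le> k"
proof -
  have "\<bar>integral\<^sup>L lam u\<bar> \<le> integral\<^sup>L lam (\<lambda>y. k * q x y)"
    by (rule abs_int_le) (use assms q_int in auto)
  also have "\<dots> = k" using q_integral by simp
  finally show ?thesis .
qed

lemma acc_meas: "(\<lambda>y. mh_acc d lam \<pi> Xs \<theta> x y) \<in> borel_measurable lam"
  unfolding mh_acc_def
  by (intro borel_measurable_min borel_measurable_const borel_measurable_divide pt_meas)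

lemma acc_range: "pos \<theta> \<Longrightarrow> 0 \<le> mh_acc d lam \<pi> Xs \<theta> x y \<and> mh_acc d lam \<pi> Xs \<theta> x y \<le> 1"
  unfolding mh_acc_def using pt_nonneg[of \<theta> x] pt_nonneg[of \<theta> y] by simp

lemma acc_rel:
  assumes "pos \<theta>" "pos \<theta>'" "\<And>i. i < d \<Longrightarrow> \<theta>' i = \<theta> i * s i"
    and "\<And>i. i < d \<Longrightarrow> 0 < s i"
  shows "mh_acc d lam \<pi> Xs \<theta>' x y = min 1 ((s (I x) / s (I y)) * (pt \<theta> y / pt \<theta> x))"
proof -
  have cx: "I x < d" and cy: "I y < d" using cell_prop by auto
  have Zp: "0 < Z \<theta>" "0 < Z \<theta>'" using Z_pos assms(1,2) by auto
  have p: "0 < \<theta> (I x)" "0 < \<theta> (I y)" "0 < s (I x)" "0 < s (I y)"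
    using assms(1,4) cx cy by auto
  have "pt \<theta>' y / pt \<theta>' x = (s (I x) / s (I y)) * (pt \<theta> y / pt \<theta> x)"
    unfolding pt_eq assms(3)[OF cx] assms(3)[OF cy]
    using Zp p pi_ne0[of x] by (simp add: field_simps)
  then show ?thesis unfolding mh_acc_def by simp
qed

lemma acc_diff:
  assumes "pos \<theta>" "pos \<theta>'" "\<And>i. i < d \<Longrightarrow> \<theta>' i = \<theta> i * s i"
    and "\<And>i. i < d \<Longrightarrow> 1 - g \<le> s i \<and> s i \<le> 1 + g" "0 \<le> g" "g < 1"
  shows "\<bar>mh_acc d lam \<pi> Xs \<theta> x y - mh_acc d lam \<pi> Xs \<theta>' x y\<bar> \<le> 2 * g / (1 - g)"
proof -
  have cx: "I x < d" and cy: "I y < d" using cell_prop by auto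
  have sp: "\<And>i. i < d \<Longrightarrow> 0 < s i" using assms(4,6) by (metis add_less_same_cancel2 diff_gt_0_iff_gt le_less_trans less_trans not_less)
  have r0: "0 \<le> pt \<theta> y / pt \<theta> x" using pt_nonneg[OF assms(1)] by simp
  have t0: "0 < s (I x) / s (I y)" using sp cx cy by simp
  have "\<bar>mh_acc d lam \<pi> Xs \<theta> x y - mh_acc d lam \<pi> Xs \<theta>' x y\<bar> \<le> \<bar>s (I x) / s (I y) - 1\<bar>"
  proof -
    have e1: "mh_acc d lam \<pi> Xs \<theta>' x y = min 1 ((s (I x) / s (I y)) * (pt \<theta> y / pt \<theta> x))"
      by (rule acc_rel[OF assms(1-3) sp])
    have e2: "mh_acc d lam \<pi> Xs \<theta> x y = min 1 (pt \<theta> y / pt \<theta> x)" by (simp add: mh_acc_def)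
    show ?thesis unfolding e1 e2 by (rule min_diff[OF r0 t0])
  qed
  also have "s (I x) / s (I y) - 1 = (s (I x) - s (I y)) / s (I y)"
    using sp[OF cy] by (simp add: field_simps)
  also have "\<bar>(s (I x) - s (I y)) / s (I y)\<bar> = \<bar>s (I x) - s (I y)\<bar> / s (I y)"
    using sp[OF cy] by simp
  also have "\<dots> \<le> 2 * g / (1 - g)"
  proof (rule frac_le)
    show "0 \<le> 2 * g" using assms(5) by simp
    show "\<bar>s (I x) - s (I y)\<bar> \<le> 2 * g" using assms(4)[OF cx] assms(4)[OF cy] by linarith
    show "0 < 1 - g" using assms(6) by simp
    show "1 - g \<le> s (I y)" using assms(4)[OF cy] by simp
  qed
  finally show ?thesis .
qed

lemma kern:
  assumes "pos \<theta>" "pos \<theta>'" "\<And>i. i < d \<Longrightarrow> \<theta>' i = \<theta> i * s i"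
    and "\<And>i. i < d \<Longrightarrow> 1 - g \<le> s i \<and> s i \<le> 1 + g" "0 \<le> g" "g < 1"
  shows "tv_kernel lam (mh_op d lam \<pi> Xs q \<theta>) (mh_op d lam \<pi> Xs q \<theta>') x \<le> 4 * g / (1 - g)"
  unfolding tv_kernel_def
proof (rule cSUP_least, goal_cases)
  case 1
  have "(\<lambda>_. 0::real) \<in> {f \<in> borel_measurable lam. \<forall>x. \<bar>f x\<bar> \<le> (1::real)}"
    by (intro CollectI conjI borel_measurable_const allI) simp
  then show ?case using equals0D by fast
next
  case (2 f)
  then have "f \<in> borel_measurable lam \<and> (\<forall>x. \<bar>f x\<bar> \<le> 1)"
    by (rule CollectD)
  then have fm: "f \<in> borel_measurable lam" and fb: "\<And>x. \<bar>f x\<bar> \<le> 1"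
    by blast+
  define k where "k = 2 * g / (1 - g)"
  let ?a = "\<lambda>y. mh_acc d lam \<pi> Xs \<theta> x y"
  let ?b = "\<lambda>y. mh_acc d lam \<pi> Xs \<theta>' x y"
  have ar: "0 \<le> ?a y \<and> ?a y \<le> 1" "0 \<le> ?b y \<and> ?b y \<le> 1" for y
    using acc_range assms(1,2) by auto
  have ad: "\<bar>?a y - ?b y\<bar> \<le> k" for y unfolding k_def by (rule acc_diff[OF assms])
  have am: "?a \<in> borel_measurable lam" "?b \<in> borel_measurable lam" by (rule acc_meas)+
  have qm: "(\<lambda>y. q x y) \<in> borel_measurable lam" by (rule q_meas_y)
  have int1: "integrable lam (\<lambda>y. f y * q x y * c y)"
    if cm: "c \<in> borel_measurable lam" and cb: "\<And>y. 0 \<le> c y \<and> c y \<le> 1" for c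
  proof (rule Bochner_Integration.integrable_bound[OF q_int])
    show "(\<lambda>y. f y * q x y * c y) \<in> borel_measurable lam"
      using fm qm cm by (intro borel_measurable_times)
    show "AE y in lam. norm (f y * q x y * c y) \<le> norm (q x y)"
    proof (rule AE_I2)
      fix y
      have "\<bar>f y * q x y * c y\<bar> = \<bar>f y\<bar> * q x y * c y" using q_nonneg[of x y] cb[of y] by (simp add: abs_mult)
      also have "\<dots> \<le> 1 * q x y * 1"
        using fb[of y] q_nonneg[of x y] cb[of y] by (intro mult_mono) auto
      finally show "norm (f y * q x y * c y) \<le> norm (q x y)" using q_nonneg[of x y] by simp
    qed
  qed
  have int2: "integrable lam (\<lambda>y. q x y * c y)"
    if cm: "c \<in> borel_measurable lam" and cb: "\<And>y. 0 \<le> c y \<and> c y \<le> 1" for c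
  proof (rule Bochner_Integration.integrable_bound[OF q_int])
    show "(\<lambda>y. q x y * c y) \<in> borel_measurable lam"
      using qm cm by (intro borel_measurable_times)
    show "AE y in lam. norm (q x y * c y) \<le> norm (q x y)"
    proof (rule AE_I2)
      fix y
      have "q x y * c y \<le> q x y * 1" using q_nonneg[of x y] cb[of y] by (intro mult_left_mono) auto
      then show "norm (q x y * c y) \<le> norm (q x y)" using q_nonneg[of x y] cb[of y] by simp
    qed
  qed
  have ia: "integrable lam (\<lambda>y. f y * q x y * ?a y)" "integrable lam (\<lambda>y. f y * q x y * ?b y)"
    "integrable lam (\<lambda>y. q x y * ?a y)" "integrable lam (\<lambda>y. q x y * ?b y)"
    using int1[OF am(1) ar(1)] int1[OF am(2) ar(2)] int2[OF am(1) ar(1)] int2[OF am(2) ar(2)] by auto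
  have D1: "\<bar>integral\<^sup>L lam (\<lambda>y. f y * q x y * ?a y) - integral\<^sup>L lam (\<lambda>y. f y * q x y * ?b y)\<bar> \<le> k"
  proof -
    have "integral\<^sup>L lam (\<lambda>y. f y * q x y * ?a y) - integral\<^sup>L lam (\<lambda>y. f y * q x y * ?b y)
        = integral\<^sup>L lam (\<lambda>y. f y * q x y * ?a y - f y * q x y * ?b y)"
      using ia by simp
    also have "\<bar>\<dots>\<bar> \<le> k"
    proof (rule int_q_bound)
      show "integrable lam (\<lambda>y. f y * q x y * ?a y - f y * q x y * ?b y)" using ia by simp
      fix y
      have "\<bar>f y * q x y * ?a y - f y * q x y * ?b y\<bar> = \<bar>f y\<bar> * (q x y * \<bar>?a y - ?b y\<bar>)"
        using q_nonneg[of x y] by (simp add: abs_mult right_diff_distrib[symmetric] mult.assoc)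
      also have "\<dots> \<le> 1 * (q x y * \<bar>?a y - ?b y\<bar>)"
        using fb[of y] q_nonneg[of x y] by (intro mult_right_mono) auto
      also have "\<dots> \<le> k * q x y" using mult_left_mono[OF ad[of y] q_nonneg[of x y]] by (simp add: mult.commute)
      finally show "\<bar>f y * q x y * ?a y - f y * q x y * ?b y\<bar> \<le> k * q x y" .
    qed
    finally show ?thesis .
  qed
  have D2: "\<bar>integral\<^sup>L lam (\<lambda>y. q x y * ?a y) - integral\<^sup>L lam (\<lambda>y. q x y * ?b y)\<bar> \<le> k"
  proof -
    have "integral\<^sup>L lam (\<lambda>y. q x y * ?a y) - integral\<^sup>L lam (\<lambda>y. q x y * ?b y)
        = integral\<^sup>L lam (\<lambda>y. q x y * ?a y - q x y * ?b y)"
      using ia by simp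
    also have "\<bar>\<dots>\<bar> \<le> k"
    proof (rule int_q_bound)
      show "integrable lam (\<lambda>y. q x y * ?a y - q x y * ?b y)" using ia by simp
      fix y
      have "\<bar>q x y * ?a y - q x y * ?b y\<bar> = q x y * \<bar>?a y - ?b y\<bar>"
        using q_nonneg[of x y] by (simp add: abs_mult right_diff_distrib[symmetric])
      also have "\<dots> \<le> k * q x y" using mult_left_mono[OF ad[of y] q_nonneg[of x y]] by (simp add: mult.commute)
      finally show "\<bar>q x y * ?a y - q x y * ?b y\<bar> \<le> k * q x y" .
    qed
    finally show ?thesis .
  qed
  define A where "A = integral\<^sup>L lam (\<lambda>y. f y * q x y * ?a y)"
  define A' where "A' = integral\<^sup>L lam (\<lambda>y. f y * q x y * ?b y)"
  define B where "B = integral\<^sup>L lam (\<lambda>y. q x y * ?a y)"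
  define B' where "B' = integral\<^sup>L lam (\<lambda>y. q x y * ?b y)"
  have "mh_op d lam \<pi> Xs q \<theta> f x - mh_op d lam \<pi> Xs q \<theta>' f x = (A - A') - f x * (B - B')"
    unfolding mh_op_def A_def A'_def B_def B'_def by (simp add: algebra_simps)
  also have "\<bar>\<dots>\<bar> \<le> \<bar>A - A'\<bar> + \<bar>f x\<bar> * \<bar>B - B'\<bar>" by (simp add: abs_mult[symmetric] abs_triangle_ineq4)
  also have "\<dots> \<le> k + 1 * k"
    using D1 D2 fb[of x] unfolding A_def A'_def B_def B'_def
    by (intro add_mono mult_mono) auto
  also have "\<dots> = 4 * g / (1 - g)" unfolding k_def by simp
  finally show ?case .
qed

end

theorem mainTheorem14:
  fixes lam :: "'a::polish_space measure"
    and \<pi> :: "'a \<Rightarrow> real"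
    and d :: nat
    and Xs :: "nat \<Rightarrow> 'a set"
    and q :: "'a \<Rightarrow> 'a \<Rightarrow> real"
    and \<gamma> :: "nat \<Rightarrow> real"
    and M :: "'w measure"
    and X :: "nat \<Rightarrow> 'w \<Rightarrow> 'a"
    and \<theta> :: "nat \<Rightarrow> 'w \<Rightarrow> nat \<Rightarrow> real"
  assumes lam_borel: "sets lam = sets borel"
    and lam_sf: "sigma_finite_measure lam"
    and pi_meas: "\<pi> \<in> borel_measurable lam"
    and pi_nonneg: "\<And>x. 0 \<le> \<pi> x"
    and pi_prob: "(\<integral>\<^sup>+x. ennreal (\<pi> x) \<partial>lam) = 1"
    and d_ge: "2 \<le> d"
    and Xs_meas: "\<And>i. i < d \<Longrightarrow> Xs i \<in> sets borel"
    and Xs_disj: "\<And>i j. i < d \<Longrightarrow> j < d \<Longrightarrow> i \<noteq> j \<Longrightarrow> Xs i \<inter> Xs j = {}"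
    and Xs_cover: "(\<Union>i<d. Xs i) = UNIV"
    \<comment> \<open>(A1)\<close>
    and A1_inf: "\<exists>c>0. \<forall>x. c \<le> \<pi> x"
    and A1_sup: "\<exists>C. \<forall>x. \<pi> x \<le> C"
    and A1_theta: "\<And>i. i < d \<Longrightarrow> 0 < theta_star lam \<pi> Xs i"
    \<comment> \<open>(A2): symmetric proposal density q w.r.t. lam, bounded below\<close>
    and q_meas: "case_prod q \<in> borel_measurable (lam \<Otimes>\<^sub>M lam)"
    and q_nonneg: "\<And>x y. 0 \<le> q x y"
    and q_dens: "\<And>x. (\<integral>\<^sup>+y. ennreal (q x y) \<partial>lam) = 1"
    and q_sym: "\<And>x y. q x y = q y x"
    and q_inf: "\<exists>c>0. \<forall>x y. c \<le> q x y"
    \<comment> \<open>step sizes gamma_n, n >= 1\<close>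
    and gamma_range: "\<And>n. 1 \<le> n \<Longrightarrow> 0 \<le> \<gamma> n \<and> \<gamma> n < 1"
    and gamma_mono: "\<And>n. 1 \<le> n \<Longrightarrow> \<gamma> (Suc n) \<le> \<gamma> n"
    and gamma_lim: "\<gamma> \<longlonglongrightarrow> 0"
    and gamma_sq: "summable (\<lambda>n. (\<gamma> n)\<^sup>2)"
    \<comment> \<open>linearized Wang--Landau algorithm\<close>
    and M_prob: "prob_space M"
    and X_meas: "\<And>n. X n \<in> M \<rightarrow>\<^sub>M lam"
    and theta0_meas: "\<And>i. i < d \<Longrightarrow> (\<lambda>\<omega>. \<theta> 0 \<omega> i) \<in> borel_measurable M"
    and theta0_in: "\<And>\<omega>. \<omega> \<in> space M \<Longrightarrow> \<theta> 0 \<omega> \<in> Theta d"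
    and X_law: "\<And>n A. A \<in> sets lam \<Longrightarrow>
        AE \<omega> in M. real_cond_exp M (wl_filtration M d X (\<theta> 0) n)
                       (\<lambda>\<omega>'. indicator A (X (Suc n) \<omega>')) \<omega>
                   = mh_op d lam \<pi> Xs q (\<theta> n \<omega>) (indicator A) (X n \<omega>)"
    and theta_update: "\<And>n \<omega> i. \<omega> \<in> space M \<Longrightarrow> i < d \<Longrightarrow>
        \<theta> (Suc n) \<omega> i = \<theta> n \<omega> i + \<gamma> (Suc n) * H_wl d Xs i (X (Suc n) \<omega>) (\<theta> n \<omega>)"
  shows "AE \<omega> in M.
     (\<forall>n. tv_dist (density lam (\<lambda>x. ennreal (pi_theta d lam \<pi> Xs (\<theta> n \<omega>) x)))
                  (density lam (\<lambda>x. ennreal (pi_theta d lam \<pi> Xs (\<theta> (Suc n) \<omega>) x)))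
          \<le> 2 * real d * (real d - 1) * \<gamma> (Suc n))
   \<and> (\<forall>N n. N \<le> n \<longrightarrow>
        (SUP x\<in>UNIV. tv_kernel lam (mh_op d lam \<pi> Xs q (\<theta> n \<omega>))
                                    (mh_op d lam \<pi> Xs q (\<theta> (Suc n) \<omega>)) x)
          \<le> 4 * (1 + 1 / (1 - (SUP j\<in>{N..}. \<gamma> (Suc j)))) * \<gamma> (Suc n))"
proof -
  interpret W: wl lam \<pi> d Xs q
    apply unfold_locales
    apply (fact lam_borel)
    apply (fact pi_meas)
    apply (fact pi_nonneg)
    apply (fact pi_prob)
    apply (fact d_ge)
    apply (fact Xs_meas)
    apply (fact Xs_disj)
    apply (fact Xs_cover)
    apply (fact A1_inf)
    apply (fact A1_theta)
    apply (fact q_meas)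
    apply (fact q_nonneg)
    apply (fact q_dens)
    done
  define s where "s n \<omega> i = 1 + \<gamma> (Suc n) * (indicator (Xs i) (X (Suc n) \<omega>) - \<theta> n \<omega> (cell_index d Xs (X (Suc n) \<omega>)))"
    for n \<omega> i
  have gr: "0 \<le> \<gamma> (Suc n)" "\<gamma> (Suc n) < 1" for n using gamma_range[of "Suc n"] by auto
  have rel: "\<theta> (Suc n) \<omega> i = \<theta> n \<omega> i * s n \<omega> i" if "\<omega> \<in> space M" "i < d" for n \<omega> i
    unfolding s_def by (rule W.step_form[where \<theta>'="\<theta> (Suc n) \<omega>" and \<theta>="\<theta> n \<omega>", OF theta_update[OF that]])
  have inv: "W.pos (\<theta> n \<omega>) \<and> (\<Sum>i<d. \<theta> n \<omega> i) = 1" if w: "\<omega> \<in> space M" for n \<omega>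
  proof (induction n)
    case 0
    then show ?case using theta0_in[OF w] unfolding Theta_def by auto
  next
    case (Suc n)
    show ?case
      by (rule W.step_inv[where x="X (Suc n) \<omega>", OF conjunct1[OF Suc] conjunct2[OF Suc] gr[of n]])
         (use rel[OF w] in \<open>simp add: s_def\<close>)
  qed
  have sb: "1 - \<gamma> (Suc n) \<le> s n \<omega> i \<and> s n \<omega> i \<le> 1 + \<gamma> (Suc n)" if "\<omega> \<in> space M" for n \<omega> i
    unfolding s_def using W.s_bounds[OF conjunct1[OF inv[OF that]] conjunct2[OF inv[OF that]] gr] by blast
  have dd: "4 \<le> 2 * real d * (real d - 1)"
  proof -
    have "(2::real) * 1 \<le> real d * (real d - 1)" using d_ge by (intro mult_mono) auto
    then show ?thesis by simp
  qed
  have gmono: "\<gamma> (Suc j) \<le> \<gamma> (Suc N)" if "N \<le> j" for N j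
    using that
  proof (induction j rule: dec_induct)
    case base then show ?case by simp
  next
    case (step j) then show ?case using gamma_mono[of "Suc j"] by simp
  qed
  show ?thesis
  proof (rule AE_I2, intro conjI allI impI)
    fix \<omega> assume w: "\<omega> \<in> space M"
    fix n
    have t: "tv_dist (density lam (\<lambda>x. ennreal (pi_theta d lam \<pi> Xs (\<theta> n \<omega>) x)))
                  (density lam (\<lambda>x. ennreal (pi_theta d lam \<pi> Xs (\<theta> (Suc n) \<omega>) x))) \<le> 4 * \<gamma> (Suc n)"
      by (rule W.tv1[OF conjunct1[OF inv[OF w]] conjunct1[OF inv[OF w]] rel[OF w] sb[OF w] gr])
    have "4 * \<gamma> (Suc n) \<le> 2 * real d * (real d - 1) * \<gamma> (Suc n)"
      using dd gr[of n] by (intro mult_right_mono) auto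
    with t show "tv_dist (density lam (\<lambda>x. ennreal (pi_theta d lam \<pi> Xs (\<theta> n \<omega>) x)))
                  (density lam (\<lambda>x. ennreal (pi_theta d lam \<pi> Xs (\<theta> (Suc n) \<omega>) x)))
          \<le> 2 * real d * (real d - 1) * \<gamma> (Suc n)" by linarith
  next
    fix \<omega> assume w: "\<omega> \<in> space M"
    fix N n :: nat assume Nn: "N \<le> n"
    let ?G = "SUP j\<in>{N..}. \<gamma> (Suc j)"
    have bdd: "bdd_above ((\<lambda>j. \<gamma> (Suc j)) ` {N..})"
      by (rule bdd_aboveI[of _ "\<gamma> (Suc N)"]) (use gmono in auto)
    have gG: "\<gamma> (Suc n) \<le> ?G" using Nn by (intro cSUP_upper bdd) auto
    have G1: "?G < 1"
    proof -
      have "?G \<le> \<gamma> (Suc N)" by (rule cSUP_least) (use gmono in auto)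
      then show ?thesis using gr[of N] by linarith
    qed
    have k: "tv_kernel lam (mh_op d lam \<pi> Xs q (\<theta> n \<omega>)) (mh_op d lam \<pi> Xs q (\<theta> (Suc n) \<omega>)) x
        \<le> 4 * \<gamma> (Suc n) / (1 - \<gamma> (Suc n))" for x
      by (rule W.kern[OF conjunct1[OF inv[OF w]] conjunct1[OF inv[OF w]] rel[OF w] sb[OF w] gr])
    have "(SUP x\<in>UNIV. tv_kernel lam (mh_op d lam \<pi> Xs q (\<theta> n \<omega>))
                                    (mh_op d lam \<pi> Xs q (\<theta> (Suc n) \<omega>)) x) \<le> 4 * \<gamma> (Suc n) / (1 - \<gamma> (Suc n))"
      by (rule cSUP_least) (use k in auto)
    also have "\<dots> \<le> 4 * \<gamma> (Suc n) / (1 - ?G)"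
      by (rule divide_left_mono) (use gG G1 gr[of n] in auto)
    also have "\<dots> \<le> 4 * (1 + 1 / (1 - ?G)) * \<gamma> (Suc n)"
      using gr[of n] by (simp add: algebra_simps)
    finally show "(SUP x\<in>UNIV. tv_kernel lam (mh_op d lam \<pi> Xs q (\<theta> n \<omega>))
                                    (mh_op d lam \<pi> Xs q (\<theta> (Suc n) \<omega>)) x)
          \<le> 4 * (1 + 1 / (1 - ?G)) * \<gamma> (Suc n)" .
  qed
qed

end
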